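(* Let $G$ be a $2$-connected graph of order at least three. If $\sigma_2(G)\ge 2\widetilde{\alpha}(G)$, then $G$ is hamiltonian (i.e., $G$ contains a cycle through every vertex).
   Context: All graphs are finite and simple. For a graph $G$ that is not complete, $\sigma_2(G)=\min\{d_G(u)+d_G(v): u,v\in V(G),\ u\ne v,\ uv\notin E(G)\}$; if $G$ is complete, $\sigma_2(G)=\infty$. An $(s,t)$-bipartite-hole in $G$ consists of two disjoint vertex sets $S,T\subseteq V(G)$ with $|S|=s$, $|T|=t$ and no edge of $G$ having one endpoint in $S$ and the other in $T$. The bipartite-hole-number $\widetilde{\alpha}(G)$ is the minimum integer $k$ such that there exist positive integers $s,t$ with $s+t=k+1$ for which $G$ contains no $(s,t)$-bipartite-hole. *)

theory Defs
  imports Main "HOL-Library.Extended_Nat"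
begin

definition simple_graph :: "'a set \<Rightarrow> ('a \<Rightarrow> 'a \<Rightarrow> bool) \<Rightarrow> bool" where
  "simple_graph V E \<longleftrightarrow> finite V \<and> (\<forall>u v. E u v \<longrightarrow> E v u) \<and> (\<forall>v. \<not> E v v)
     \<and> (\<forall>u v. E u v \<longrightarrow> u \<in> V \<and> v \<in> V)"

definition degree :: "'a set \<Rightarrow> ('a \<Rightarrow> 'a \<Rightarrow> bool) \<Rightarrow> 'a \<Rightarrow> nat" where
  "degree V E v = card {u \<in> V. E v u}"

text \<open>sigma_2: minimum degree sum over non-adjacent pairs of distinct vertices;
  infinity (top of enat, the Inf of the empty set) if the graph is complete.\<close>
definition sigma2 :: "'a set \<Rightarrow> ('a \<Rightarrow> 'a \<Rightarrow> bool) \<Rightarrow> enat" where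
  "sigma2 V E = (INF p \<in> {(u, v). u \<in> V \<and> v \<in> V \<and> u \<noteq> v \<and> \<not> E u v}.
                    enat (degree V E (fst p) + degree V E (snd p)))"

definition has_bipartite_hole :: "'a set \<Rightarrow> ('a \<Rightarrow> 'a \<Rightarrow> bool) \<Rightarrow> nat \<Rightarrow> nat \<Rightarrow> bool" where
  "has_bipartite_hole V E s t \<longleftrightarrow> (\<exists>S T. S \<subseteq> V \<and> T \<subseteq> V \<and> S \<inter> T = {} \<and>
      card S = s \<and> card T = t \<and> (\<forall>x\<in>S. \<forall>y\<in>T. \<not> E x y))"

definition bipartite_hole_number :: "'a set \<Rightarrow> ('a \<Rightarrow> 'a \<Rightarrow> bool) \<Rightarrow> nat" where
  "bipartite_hole_number V E =
     (LEAST k. \<exists>s t. 0 < s \<and> 0 < t \<and> s + t = k + 1 \<and> \<not> has_bipartite_hole V E s t)"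

definition connected_on :: "'a set \<Rightarrow> ('a \<Rightarrow> 'a \<Rightarrow> bool) \<Rightarrow> bool" where
  "connected_on W E \<longleftrightarrow> W \<noteq> {} \<and>
     (\<forall>u\<in>W. \<forall>v\<in>W. (u, v) \<in> {(x, y). x \<in> W \<and> y \<in> W \<and> E x y}\<^sup>*)"

definition two_connected :: "'a set \<Rightarrow> ('a \<Rightarrow> 'a \<Rightarrow> bool) \<Rightarrow> bool" where
  "two_connected V E \<longleftrightarrow> card V \<ge> 3 \<and> connected_on V E \<and> (\<forall>x\<in>V. connected_on (V - {x}) E)"

definition hamiltonian :: "'a set \<Rightarrow> ('a \<Rightarrow> 'a \<Rightarrow> bool) \<Rightarrow> bool" where
  "hamiltonian V E \<longleftrightarrow> (\<exists>vs. distinct vs \<and> set vs = V \<and> length vs \<ge> 3 \<and>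
     (\<forall>i < length vs. E (vs ! i) (vs ! ((i + 1) mod length vs))))"

end

theory Submission
  imports Defs
begin

lemma successively_upt:
  "(\<And>i. m \<le> i \<Longrightarrow> Suc i < n \<Longrightarrow> P i (Suc i)) \<Longrightarrow> successively P [m..<n]"
proof (induction n)
  case 0 then show ?case by simp
next
  case (Suc n)
  show ?case
  proof (cases "m \<le> n")
    case True
    then have "[m..<Suc n] = [m..<n] @ [n]" by simp
    moreover have "successively P [m..<n]" using Suc by auto
    moreover have "m < n \<Longrightarrow> P (n - 1) n" using Suc.prems[of "n-1"] by auto
    ultimately show ?thesis by (cases "m < n") (auto simp: successively_append_iff)
  next
    case False then show ?thesis by simp
  qed
qed

lemma crossing:
  assumes "connected_on W E" "X \<subseteq> W" "x \<in> X" "y \<in> W - X"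
  shows "\<exists>u\<in>X. \<exists>v\<in>W - X. E u v"
proof -
  let ?R = "{(x, y). x \<in> W \<and> y \<in> W \<and> E x y}"
  have "(x, y) \<in> ?R\<^sup>*" using assms unfolding connected_on_def by auto
  then have "x \<in> X \<Longrightarrow> y \<notin> X \<Longrightarrow> \<exists>u\<in>X. \<exists>v\<in>W - X. E u v"
  proof (induction rule: rtrancl_induct)
    case base then show ?case by simp
  next
    case (step y z)
    then show ?case by (cases "y \<in> X") auto
  qed
  then show ?thesis using assms by auto
qed

lemma cut_lemma:
  assumes "Z \<subseteq> V - {c}" "b \<in> Z" "a \<in> V - {c}" "a \<notin> Z"
    and "\<And>z w. z \<in> Z \<Longrightarrow> E z w \<Longrightarrow> w \<in> Z \<or> w = c"
  shows "\<not> connected_on (V - {c}) E"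
proof
  assume "connected_on (V - {c}) E"
  then obtain u v where "u \<in> Z" "v \<in> (V - {c}) - Z" "E u v"
    using crossing[of "V - {c}" E Z b a] assms by blast
  then show False using assms(5)[of u v] by auto
qed

lemma ham_intro:
  assumes "distinct vs" "set vs = V" "3 \<le> length vs" "successively E vs" "E (last vs) (hd vs)"
  shows "hamiltonian V E"
  unfolding hamiltonian_def
proof (intro exI conjI allI impI)
  fix i assume i: "i < length vs"
  show "E (vs ! i) (vs ! ((i + 1) mod length vs))"
  proof (cases "Suc i < length vs")
    case True then show ?thesis using successively_nth[OF assms(4) True] by simp
  next
    case False
    then have "i = length vs - 1" using i by simp
    moreover have "Suc (length vs - 1) mod length vs = 0" using assms(3) by (subst Suc_diff_1) auto
    moreover have "vs \<noteq> []" using assms(3) by auto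
    ultimately show ?thesis using assms(3,5) last_conv_nth[of vs] hd_conv_nth[of vs] by auto
  qed
qed (use assms in auto)

locale hg =
  fixes V :: "'a set" and E :: "'a \<Rightarrow> 'a \<Rightarrow> bool" and s t k :: nat
  assumes fin: "finite V" and sym: "E u v \<Longrightarrow> E v u" and irr: "\<not> E v v"
    and inV: "E u v \<Longrightarrow> u \<in> V"
    and sig: "u \<in> V \<Longrightarrow> v \<in> V \<Longrightarrow> u \<noteq> v \<Longrightarrow> \<not> E u v \<Longrightarrow>
              2 * k \<le> degree V E u + degree V E v"
    and spos: "0 < s" and tpos: "0 < t" and stk: "s + t = k + 1"
    and nohole: "\<not> has_bipartite_hole V E s t"
    and conn: "connected_on V E" and conn2: "\<And>x. x \<in> V \<Longrightarrow> connected_on (V - {x}) E"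
    and nonham: "\<not> hamiltonian V E" and card3: "3 \<le> card V"
begin

lemma inV2: "E u v \<Longrightarrow> v \<in> V" by (rule inV[OF sym])

definition isPath :: "'a list \<Rightarrow> bool" where
  "isPath xs \<longleftrightarrow> distinct xs \<and> set xs \<subseteq> V \<and> successively E xs"

lemma no_hole:
  assumes "S \<subseteq> V" "T \<subseteq> V" "S \<inter> T = {}" "s \<le> card S" "t \<le> card T"
    "\<And>x y. x \<in> S \<Longrightarrow> y \<in> T \<Longrightarrow> \<not> E x y"
  shows False
proof -
  obtain S' where S': "S' \<subseteq> S" "card S' = s" using obtain_subset_with_card_n[OF assms(4)] by blast
  obtain T' where T': "T' \<subseteq> T" "card T' = t" using obtain_subset_with_card_n[OF assms(5)] by blast
  have "has_bipartite_hole V E s t"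
    unfolding has_bipartite_hole_def
    apply (rule exI[of _ S'], rule exI[of _ T'])
    using S' T' assms(1-3,6) by blast
  then show False using nohole by simp
qed

lemma low_adj: "u \<in> V \<Longrightarrow> v \<in> V \<Longrightarrow> u \<noteq> v \<Longrightarrow> degree V E u < k \<Longrightarrow> degree V E v < k \<Longrightarrow> E u v"
proof (rule ccontr)
  assume "u \<in> V" "v \<in> V" "u \<noteq> v" "degree V E u < k" "degree V E v < k" "\<not> E u v"
  then show False using sig[of u v] by linarith
qed

end

locale lp = hg +
  fixes ps :: "'a list"
  assumes ps: "isPath ps" and longest: "\<And>qs. isPath qs \<Longrightarrow> length qs \<le> length ps"
    and len3: "3 \<le> length ps"
begin

lemma ps_dist: "distinct ps" and ps_V: "set ps \<subseteq> V" and ps_succ: "successively E ps"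
  using ps unfolding isPath_def by auto

lemma adj: "Suc i < length ps \<Longrightarrow> E (ps!i) (ps!Suc i)"
  using successively_nth[OF ps_succ] .

lemma upt_R[simp]: "n \<le> length ps \<Longrightarrow> successively (\<lambda>i j. E (ps!i) (ps!j)) [m..<n]"
  by (rule successively_upt) (use adj in auto)

lemma upt_R'[simp]: "n \<le> length ps \<Longrightarrow> successively (\<lambda>i j. E (ps!j) (ps!i)) [m..<n]"
  by (rule successively_upt) (use adj sym in auto)

lemma same_len: "isPath qs \<Longrightarrow> set qs = set ps \<Longrightarrow> length qs = length ps"
  using ps_dist distinct_card unfolding isPath_def by metis

lemma nbr_last:
  assumes "isPath qs" "set qs = set ps" "qs \<noteq> []" "E (last qs) w"
  shows "w \<in> set ps"
proof (rule ccontr)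
  assume w: "w \<notin> set ps"
  have "isPath (qs @ [w])"
    using assms w inV2[OF assms(4)] unfolding isPath_def by (auto simp: successively_append_iff hd_rev last_rev hd_append simp del: upt_Suc)
  then have "length (qs @ [w]) \<le> length ps" by (rule longest)
  then show False using same_len[OF assms(1,2)] by simp
qed

lemma nbr_hd:
  assumes "isPath qs" "set qs = set ps" "qs \<noteq> []" "E (hd qs) w"
  shows "w \<in> set ps"
proof -
  have "isPath (rev qs)" using assms(1) sym unfolding isPath_def by (auto intro: successively_mono)
  then show ?thesis using nbr_last[of "rev qs" w] assms by (simp add: last_rev)
qed

lemma NC:
  assumes "distinct vs" "set vs = set ps" "3 \<le> length vs" "successively E vs" "E (last vs) (hd vs)"
  shows False
proof (cases "set ps = V")
  case True then show False using ham_intro[of vs V E] assms nonham by auto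
next
  case False
  have "hd ps \<in> set ps" using len3 by (cases ps) auto
  moreover obtain y0 where "y0 \<in> V - set ps" using False ps_V by auto
  ultimately obtain x y where xy: "x \<in> set ps" "y \<in> V - set ps" "E x y"
    using crossing[OF conn ps_V] by blast
  then obtain i where i: "i < length vs" "vs ! i = x" using assms(2) by (metis in_set_conv_nth)
  have sp: "successively E (take i vs)" "successively E (drop i vs)"
    using assms(4) successively_append_iff[of E "take i vs" "drop i vs"] by auto
  have ne: "drop i vs \<noteq> []" using i by simp
  have "successively E (drop i vs @ take i vs)"
  proof (cases "i = 0")
    case True then show ?thesis using sp by simp
  next
    case False
    then have "hd (take i vs) = hd vs" using i by (cases vs) auto
    moreover have "last (drop i vs) = last vs" using i by simp
    ultimately show ?thesis using sp assms(5) ne by (auto simp: successively_append_iff hd_rev last_rev hd_append simp del: upt_Suc)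
  qed
  moreover have "hd (drop i vs @ take i vs) = x" using i ne by (simp add: hd_drop_conv_nth)
  ultimately have "successively E (y # (drop i vs @ take i vs))"
    using xy sym by (auto simp: successively_Cons)
  moreover have "distinct (y # (drop i vs @ take i vs))" "set (y # (drop i vs @ take i vs)) \<subseteq> V"
  proof -
    have rot: "drop i vs @ take i vs = rotate i vs" using i(1) by (simp add: rotate_drop_take)
    show "distinct (y # (drop i vs @ take i vs))" "set (y # (drop i vs @ take i vs)) \<subseteq> V"
      unfolding rot using assms(1,2) xy ps_V by auto
  qed
  ultimately have "isPath (y # (drop i vs @ take i vs))" unfolding isPath_def by simp
  then have "length (y # (drop i vs @ take i vs)) \<le> length ps" by (rule longest)
  moreover have "length vs = length ps" using assms(1,2) ps_dist distinct_card by metis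
  ultimately show False using i by simp
qed


abbreviation R :: "nat \<Rightarrow> nat \<Rightarrow> bool" where "R i j \<equiv> E (ps!i) (ps!j)"

lemma idx_map:
  assumes "distinct is" "set is = {..<length ps}"
  shows "distinct (map ((!) ps) is)" "set (map ((!) ps) is) = set ps"
    "length (map ((!) ps) is) = length ps" "is \<noteq> []"
proof -
  show "distinct (map ((!) ps) is)" using assms ps_dist
    by (simp add: distinct_map inj_on_nth)
  have "set ps = (!) ps ` {..<length ps}" by (auto simp: in_set_conv_nth image_iff)
  then show "set (map ((!) ps) is) = set ps" using assms by simp
  have "length is = card {..<length ps}" using assms distinct_card by metis
  then show "length (map ((!) ps) is) = length ps" by simp
  then show "is \<noteq> []" using len3 by auto
qed

lemma idx_cycle:
  assumes "distinct is" "set is = {..<length ps}" "successively R is" "R (last is) (hd is)"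
  shows False
proof -
  note m = idx_map[OF assms(1,2)]
  show False
  proof (rule NC[of "map ((!) ps) is"])
    show "successively E (map ((!) ps) is)" using assms(3) by (simp add: successively_map)
    show "E (last (map ((!) ps) is)) (hd (map ((!) ps) is))" using assms(4) m(4)
      by (simp add: last_map hd_map)
  qed (use m len3 in auto)
qed

lemma idx_path:
  assumes "distinct is" "set is = {..<length ps}" "successively R is"
  shows "isPath (map ((!) ps) is)" "set (map ((!) ps) is) = set ps"
    "hd (map ((!) ps) is) = ps ! hd is" "last (map ((!) ps) is) = ps ! last is"
    "map ((!) ps) is \<noteq> []"
proof -
  note m = idx_map[OF assms(1,2)]
  show "isPath (map ((!) ps) is)" unfolding isPath_def
    using m assms(3) ps_V by (auto simp: successively_map)
  show "set (map ((!) ps) is) = set ps" by (fact m)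
  show "hd (map ((!) ps) is) = ps ! hd is" "last (map ((!) ps) is) = ps ! last is"
    "map ((!) ps) is \<noteq> []" using m(4) by (auto simp: last_map hd_map)
qed

lemma deg_count:
  assumes "\<And>w. E x w \<Longrightarrow> w \<in> set ps"
  shows "degree V E x = card {i. i < length ps \<and> E x (ps!i)}"
proof -
  have "{u \<in> V. E x u} = (!) ps ` {i. i < length ps \<and> E x (ps!i)}"
    using assms ps_V by (auto simp: in_set_conv_nth)
  moreover have "inj_on ((!) ps) {i. i < length ps \<and> E x (ps!i)}"
    using ps_dist by (simp add: inj_on_nth)
  ultimately show ?thesis unfolding degree_def by (simp add: card_image)
qed


lemma card_shift_minus:
  assumes "\<And>i. i \<in> X \<Longrightarrow> 1 \<le> i \<and> i < length ps"
  shows "card ((\<lambda>i. ps!(i-1)) ` X) = card X"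
proof (rule card_image, rule inj_onI)
  fix i j assume "i \<in> X" "j \<in> X" "ps!(i-1) = ps!(j-1)"
  moreover have "i - 1 < length ps" "j - 1 < length ps" "1 \<le> i" "1 \<le> j" using assms[of i] assms[of j] \<open>i \<in> X\<close> \<open>j \<in> X\<close> by auto
  ultimately have "i - 1 = j - 1" using ps_dist nth_eq_iff_index_eq[of ps "i-1" "j-1"] by auto
  then show "i = j" using \<open>1 \<le> i\<close> \<open>1 \<le> j\<close> by arith
qed

lemma card_shift_plus:
  assumes "\<And>i. i \<in> X \<Longrightarrow> i + 1 < length ps"
  shows "card ((\<lambda>i. ps!(i+1)) ` X) = card X"
proof (rule card_image, rule inj_onI)
  fix i j assume "i \<in> X" "j \<in> X" "ps!(i+1) = ps!(j+1)"
  then show "i = j" using assms[of i] assms[of j] ps_dist nth_eq_iff_index_eq[of ps "i+1" "j+1"] by auto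
qed

lemma ps_ne: "ps \<noteq> []" using len3 by auto

lemma psV: "i < length ps \<Longrightarrow> ps!i \<in> V" using ps_V nth_mem by blast

lemma sweep:
  assumes ka: "k \<le> degree V E (hd ps)" and kb: "k \<le> degree V E (last ps)"
  shows False
proof -
  define L where "L = length ps"
  have L3: "3 \<le> L" using len3 L_def by simp
  have hd: "hd ps = ps!0" using ps_ne by (simp add: hd_conv_nth)
  have lst: "last ps = ps!(L-1)" using ps_ne L_def by (simp add: last_conv_nth)
  define A where "A = {i. i < L \<and> E (ps!0) (ps!i)}"
  define B where "B = {i. i < L \<and> E (ps!(L-1)) (ps!i)}"
  have cA: "k \<le> card A"
    using ka deg_count[of "ps!0"] nbr_hd[OF ps refl ps_ne] unfolding A_def L_def hd by simp
  have cB: "k \<le> card B"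
    using kb deg_count[of "ps!(L-1)"] nbr_last[OF ps refl ps_ne] unfolding B_def L_def lst by simp
  have ab: "\<not> E (ps!(L-1)) (ps!0)"
  proof
    assume "E (ps!(L-1)) (ps!0)"
    then show False using NC[OF ps_dist refl len3 ps_succ] hd lst by metis
  qed
  have A1: "1 \<le> i \<and> i + 2 \<le> L" if "i \<in> A" for i
  proof -
    have "i \<noteq> 0" using that irr[of "ps!0"] unfolding A_def by (cases i) auto
    moreover have "i \<noteq> L - 1" using that ab sym unfolding A_def by (cases "i = L - 1") auto
    ultimately show ?thesis using that unfolding A_def by auto
  qed
  have B1: "1 \<le> i \<and> i + 2 \<le> L" if "i \<in> B" for i
  proof -
    have "i \<noteq> 0" using that ab unfolding B_def by (cases i) auto
    moreover have "i \<noteq> L - 1" using that irr unfolding B_def by auto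
    ultimately show ?thesis using that unfolding B_def by auto
  qed
  have c1: "\<not> E (ps!(a-1)) (ps!(b+1))" if "a \<in> A" "b \<in> B" "a \<le> b" for a b
  proof
    assume e: "E (ps!(a-1)) (ps!(b+1))"
    have a1: "1 \<le> a" "a + 2 \<le> L" using A1[OF that(1)] by auto
    have b1: "1 \<le> b" "b + 2 \<le> L" using B1[OF that(2)] by auto
    have ea: "E (ps!0) (ps!a)" using that(1) unfolding A_def by auto
    have eb: "E (ps!b) (ps!(L-1))" using that(2) sym unfolding B_def by auto
    show False
    proof (rule idx_cycle[of "[a..<b+1] @ rev [b+1..<L] @ rev [0..<a]"])
      show "distinct ([a..<b+1] @ rev [b+1..<L] @ rev [0..<a])" using that(3) by auto
      show "set ([a..<b+1] @ rev [b+1..<L] @ rev [0..<a]) = {..<length ps}"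
        using that(3) a1 b1 L_def by auto
      show "successively R ([a..<b+1] @ rev [b+1..<L] @ rev [0..<a])"
        using that(3) a1 b1 eb e sym L_def by (auto simp: successively_append_iff hd_rev last_rev hd_append simp del: upt_Suc)
      show "R (last ([a..<b+1] @ rev [b+1..<L] @ rev [0..<a])) (hd ([a..<b+1] @ rev [b+1..<L] @ rev [0..<a]))"
        using that(3) a1 b1 ea by (auto simp: hd_rev last_rev hd_append simp del: upt_Suc)
    qed
  qed
  have c2: "\<not> E (ps!(b-1)) (ps!(a+1))" if "a \<in> A" "b \<in> B" "b \<le> a" for a b
  proof
    assume e: "E (ps!(b-1)) (ps!(a+1))"
    have a1: "1 \<le> a" "a + 2 \<le> L" using A1[OF that(1)] by auto
    have b1: "1 \<le> b" "b + 2 \<le> L" using B1[OF that(2)] by auto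
    have ea: "E (ps!a) (ps!0)" using that(1) sym unfolding A_def by auto
    have eb: "E (ps!(L-1)) (ps!b)" using that(2) unfolding B_def by auto
    show False
    proof (rule idx_cycle[of "[0..<b] @ [a+1..<L] @ [b..<a+1]"])
      show "distinct ([0..<b] @ [a+1..<L] @ [b..<a+1])" using that(3) by auto
      show "set ([0..<b] @ [a+1..<L] @ [b..<a+1]) = {..<length ps}"
        using that(3) a1 b1 L_def by auto
      show "successively R ([0..<b] @ [a+1..<L] @ [b..<a+1])"
        using that(3) a1 b1 eb e sym L_def by (auto simp: successively_append_iff hd_rev last_rev hd_append simp del: upt_Suc)
      show "R (last ([0..<b] @ [a+1..<L] @ [b..<a+1])) (hd ([0..<b] @ [a+1..<L] @ [b..<a+1]))"
        using that(3) a1 b1 ea by (auto simp: hd_rev last_rev hd_append simp del: upt_Suc)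
    qed
  qed
  have finA: "finite A" and finB: "finite B" unfolding A_def B_def by auto
  have ks: "s \<le> k" "t \<le> k" using stk tpos spos by auto
  have ex1: "\<exists>\<tau>. s \<le> card {a\<in>A. a \<le> \<tau>}"
  proof
    have "{a\<in>A. a \<le> L} = A" unfolding A_def by auto
    then show "s \<le> card {a\<in>A. a \<le> L}" using cA ks by simp
  qed
  define \<tau>1 where "\<tau>1 = (LEAST \<tau>. s \<le> card {a\<in>A. a \<le> \<tau>})"
  have t1: "s \<le> card {a\<in>A. a \<le> \<tau>1}" unfolding \<tau>1_def by (rule LeastI_ex[OF ex1])
  have t1': "card {a\<in>A. a \<le> \<tau>} < s" if "\<tau> < \<tau>1" for \<tau>
    using not_less_Least[OF that[unfolded \<tau>1_def]] by simp
  show False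
  proof (cases "t \<le> card {b\<in>B. \<tau>1 \<le> b}")
    case True
    show False
    proof (rule no_hole[of "(\<lambda>i. ps!(i-1)) ` {a\<in>A. a \<le> \<tau>1}" "(\<lambda>i. ps!(i+1)) ` {b\<in>B. \<tau>1 \<le> b}"])
      show "(\<lambda>i. ps!(i-1)) ` {a\<in>A. a \<le> \<tau>1} \<subseteq> V" using A1 psV L_def by force
      show "(\<lambda>i. ps!(i+1)) ` {b\<in>B. \<tau>1 \<le> b} \<subseteq> V" using B1 psV L_def by force
      show "(\<lambda>i. ps!(i-1)) ` {a\<in>A. a \<le> \<tau>1} \<inter> (\<lambda>i. ps!(i+1)) ` {b\<in>B. \<tau>1 \<le> b} = {}"
      proof (rule ccontr)
        assume "\<not> ?thesis"
        then obtain a b where ab: "a \<in> A" "a \<le> \<tau>1" "b \<in> B" "\<tau>1 \<le> b" "ps!(a-1) = ps!(b+1)" by auto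
        have "a - 1 < length ps" "b + 1 < length ps" using A1[OF ab(1)] B1[OF ab(3)] L_def by auto
        then have "a - 1 = b + 1" using ab(5) ps_dist nth_eq_iff_index_eq by blast
        then show False using ab by arith
      qed
      show "s \<le> card ((\<lambda>i. ps!(i-1)) ` {a\<in>A. a \<le> \<tau>1})"
      proof -
        have "card ((\<lambda>i. ps!(i-1)) ` {a\<in>A. a \<le> \<tau>1}) = card {a\<in>A. a \<le> \<tau>1}"
          by (rule card_shift_minus) (use A1 L_def in force)
        then show ?thesis using t1 by simp
      qed
      show "t \<le> card ((\<lambda>i. ps!(i+1)) ` {b\<in>B. \<tau>1 \<le> b})"
      proof -
        have "card ((\<lambda>i. ps!(i+1)) ` {b\<in>B. \<tau>1 \<le> b}) = card {b\<in>B. \<tau>1 \<le> b}"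
          by (rule card_shift_plus) (use B1 L_def in force)
        then show ?thesis using True by simp
      qed
      fix x y assume "x \<in> (\<lambda>i. ps!(i-1)) ` {a\<in>A. a \<le> \<tau>1}" "y \<in> (\<lambda>i. ps!(i+1)) ` {b\<in>B. \<tau>1 \<le> b}"
      then show "\<not> E x y" using c1 by auto
    qed
  next
    case False
    have "card ({b\<in>B. b < \<tau>1} \<union> {b\<in>B. \<tau>1 \<le> b}) = card {b\<in>B. b < \<tau>1} + card {b\<in>B. \<tau>1 \<le> b}"
      by (rule card_Un_disjoint) (use finB in auto)
    moreover have "{b\<in>B. b < \<tau>1} \<union> {b\<in>B. \<tau>1 \<le> b} = B" by auto
    ultimately have "card B = card {b\<in>B. b < \<tau>1} + card {b\<in>B. \<tau>1 \<le> b}" by simp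
    then have sB: "s \<le> card {b\<in>B. b < \<tau>1}" using False cB stk by linarith
    then have "{b\<in>B. b < \<tau>1} \<noteq> {}" using spos by (metis card.empty not_gr0 le_0_eq)
    then have t1pos: "0 < \<tau>1" by auto
    have eqB: "{b\<in>B. b < \<tau>1} = {b\<in>B. b \<le> \<tau>1 - 1}" using t1pos by auto
    have ex2: "\<exists>\<tau>. s \<le> card {b\<in>B. b \<le> \<tau>}" using sB eqB by auto
    define \<tau>2 where "\<tau>2 = (LEAST \<tau>. s \<le> card {b\<in>B. b \<le> \<tau>})"
    have t2: "s \<le> card {b\<in>B. b \<le> \<tau>2}" unfolding \<tau>2_def by (rule LeastI_ex[OF ex2])
    have t2le: "\<tau>2 \<le> \<tau>1 - 1" unfolding \<tau>2_def using sB eqB by (intro Least_le) simp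
    have smallA: "card {a\<in>A. a < \<tau>2} < s"
    proof (cases "\<tau>2 = 0")
      case True then show ?thesis using spos by simp
    next
      case False
      then have "{a\<in>A. a < \<tau>2} = {a\<in>A. a \<le> \<tau>2 - 1}" by auto
      then show ?thesis using t1'[of "\<tau>2 - 1"] t2le t1pos False by simp
    qed
    have "card ({a\<in>A. a < \<tau>2} \<union> {a\<in>A. \<tau>2 \<le> a}) = card {a\<in>A. a < \<tau>2} + card {a\<in>A. \<tau>2 \<le> a}"
      by (rule card_Un_disjoint) (use finA in auto)
    moreover have "{a\<in>A. a < \<tau>2} \<union> {a\<in>A. \<tau>2 \<le> a} = A" by auto
    ultimately have "card A = card {a\<in>A. a < \<tau>2} + card {a\<in>A. \<tau>2 \<le> a}" by simp
    then have tA: "t \<le> card {a\<in>A. \<tau>2 \<le> a}" using smallA cA stk by linarith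
    show False
    proof (rule no_hole[of "(\<lambda>i. ps!(i-1)) ` {b\<in>B. b \<le> \<tau>2}" "(\<lambda>i. ps!(i+1)) ` {a\<in>A. \<tau>2 \<le> a}"])
      show "(\<lambda>i. ps!(i-1)) ` {b\<in>B. b \<le> \<tau>2} \<subseteq> V" using B1 psV L_def by force
      show "(\<lambda>i. ps!(i+1)) ` {a\<in>A. \<tau>2 \<le> a} \<subseteq> V" using A1 psV L_def by force
      show "(\<lambda>i. ps!(i-1)) ` {b\<in>B. b \<le> \<tau>2} \<inter> (\<lambda>i. ps!(i+1)) ` {a\<in>A. \<tau>2 \<le> a} = {}"
      proof (rule ccontr)
        assume "\<not> ?thesis"
        then obtain a b where ab: "a \<in> A" "\<tau>2 \<le> a" "b \<in> B" "b \<le> \<tau>2" "ps!(b-1) = ps!(a+1)" by auto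
        have "b - 1 < length ps" "a + 1 < length ps" using A1[OF ab(1)] B1[OF ab(3)] L_def by auto
        then have "b - 1 = a + 1" using ab(5) ps_dist nth_eq_iff_index_eq by blast
        then show False using ab by arith
      qed
      show "s \<le> card ((\<lambda>i. ps!(i-1)) ` {b\<in>B. b \<le> \<tau>2})"
      proof -
        have "card ((\<lambda>i. ps!(i-1)) ` {b\<in>B. b \<le> \<tau>2}) = card {b\<in>B. b \<le> \<tau>2}"
          by (rule card_shift_minus) (use B1 L_def in force)
        then show ?thesis using t2 by simp
      qed
      show "t \<le> card ((\<lambda>i. ps!(i+1)) ` {a\<in>A. \<tau>2 \<le> a})"
      proof -
        have "card ((\<lambda>i. ps!(i+1)) ` {a\<in>A. \<tau>2 \<le> a}) = card {a\<in>A. \<tau>2 \<le> a}"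
          by (rule card_shift_plus) (use A1 L_def in force)
        then show ?thesis using tA by simp
      qed
      fix x y assume "x \<in> (\<lambda>i. ps!(i-1)) ` {b\<in>B. b \<le> \<tau>2}" "y \<in> (\<lambda>i. ps!(i+1)) ` {a\<in>A. \<tau>2 \<le> a}"
      then show "\<not> E x y" using c2 by auto
    qed
  qed
qed


lemma lp_perm:
  assumes "distinct is" "set is = {..<length ps}" "successively R is"
  shows "lp V E s t k (map ((!) ps) is)"
proof -
  note m = idx_path[OF assms] idx_map[OF assms(1,2)]
  show ?thesis
  proof (intro lp.intro hg_axioms lp_axioms.intro)
    show "isPath (map ((!) ps) is)" by (fact m)
    show "length qs \<le> length (map ((!) ps) is)" if "isPath qs" for qs
      using longest[OF that] m by simp
    show "3 \<le> length (map ((!) ps) is)" using m len3 by simp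
  qed
qed

end

locale lpb = lp +
  assumes small: "degree V E (last ps) < k"
begin

lemma ends: "hd ps = ps!0" "last ps = ps!(length ps - 1)"
  using ps_ne by (auto simp: hd_conv_nth last_conv_nth)

lemma ab: "\<not> E (ps!0) (ps!(length ps - 1))"
proof
  assume "E (ps!0) (ps!(length ps - 1))"
  then show False using NC[OF ps_dist refl len3 ps_succ] ends sym by metis
qed

lemma da: "k \<le> degree V E (ps!0)"
proof -
  have "ps!0 \<noteq> ps!(length ps - 1)"
  proof
    assume "ps!0 = ps!(length ps - 1)"
    moreover have "0 < length ps" "length ps - 1 < length ps" using len3 by auto
    ultimately have "0 = length ps - 1" using nth_eq_iff_index_eq[OF ps_dist] by blast
    then show False using len3 by simp
  qed
  then have "2 * k \<le> degree V E (ps!0) + degree V E (ps!(length ps - 1))"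
  proof -
    have "0 < length ps" "length ps - 1 < length ps" using len3 by auto
    then have "ps!0 \<in> V" "ps!(length ps - 1) \<in> V" using psV by blast+
    then show ?thesis using sig[of "ps!0" "ps!(length ps - 1)"] ab \<open>ps!0 \<noteq> ps!(length ps - 1)\<close> by blast
  qed
  then show ?thesis using small ends by simp
qed

lemma end_lemma:
  assumes "distinct is" "set is = {..<length ps}" "successively R is" "hd is = 0"
  shows "degree V E (ps!(last is)) < k"
    and "last is \<noteq> length ps - 1 \<Longrightarrow> E (ps!(last is)) (ps!(length ps - 1))"
    and "E (ps!(last is)) w \<Longrightarrow> w \<in> set ps"
proof -
  note m = idx_path[OF assms(1-3)] idx_map[OF assms(1,2)]
  have lq: "lp V E s t k (map ((!) ps) is)" by (rule lp_perm[OF assms(1-3)])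
  have li: "last is < length ps" using assms(2) m(9) last_in_set by (metis lessThan_iff)
  show dk: "degree V E (ps!(last is)) < k"
  proof (rule ccontr)
    assume "\<not> ?thesis"
    then show False using lp.sweep[OF lq] m da assms(4) by simp
  qed
  show "E (ps!(last is)) (ps!(length ps - 1))" if "last is \<noteq> length ps - 1"
  proof (rule low_adj)
    show "ps!(last is) \<noteq> ps!(length ps - 1)"
      using that li ps_dist nth_eq_iff_index_eq[of ps "last is" "length ps - 1"] len3 by auto
    show "degree V E (ps ! (length ps - 1)) < k" using small ends by simp
  qed (use dk li psV len3 in auto)
  show "w \<in> set ps" if "E (ps!(last is)) w"
    using lp.nbr_last[OF lq m(1) _ m(5)] that m by simp
qed


abbreviation L where "L \<equiv> length ps"

definition gam where "gam = (LEAST j. E (ps!(L-1)) (ps!j))"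

lemma gex: "E (ps!(L-1)) (ps!(L-2))"
proof -
  have "Suc (L-2) < L" using len3 by auto
  then have "E (ps!(L-2)) (ps!(Suc (L-2)))" by (rule adj)
  moreover have "Suc (L-2) = L - 1" using len3 by auto
  ultimately show ?thesis using sym by metis
qed

lemma gE: "E (ps!(L-1)) (ps!gam)"
  unfolding gam_def by (rule LeastI[of _ "L-2"]) (rule gex)

lemma gmin: "E (ps!(L-1)) (ps!j) \<Longrightarrow> gam \<le> j"
  unfolding gam_def by (rule Least_le)

lemma gle: "gam + 2 \<le> L"
  using gmin[OF gex] len3 by auto

lemma g1: "1 \<le> gam"
proof (rule ccontr)
  assume "\<not> 1 \<le> gam"
  then have "gam = 0" by simp
  then show False using gE ab sym by metis
qed

lemma S3: "gam \<le> j \<Longrightarrow> j + 2 \<le> L \<Longrightarrow> E (ps!(L-1)) (ps!j)"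
proof (induction j)
  case 0 then show ?case using gE by simp
next
  case (Suc j)
  show ?case
  proof (cases "gam = Suc j")
    case True then show ?thesis using gE by simp
  next
    case False
    then have ih: "E (ps!j) (ps!(L-1))" using Suc sym by auto
    let ?is = "[0..<Suc j] @ rev [Suc j..<L]"
    have d: "distinct ?is" by auto
    have st: "set ?is = {..<L}" using Suc.prems by auto
    have sc: "successively R ?is"
      using Suc.prems ih by (auto simp: successively_append_iff hd_rev last_rev hd_append simp del: upt_Suc)
    have h: "hd ?is = 0" by (simp del: upt_Suc)
    have l: "last ?is = Suc j" using Suc.prems using ps_ne by (simp add: last_append last_rev del: upt_Suc)
    have "E (ps!(last ?is)) (ps!(L-1))"
      by (rule end_lemma(2)[OF d st sc h]) (use l Suc.prems in auto)
    then show ?thesis using l sym by simp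
  qed
qed

lemma S4:
  assumes "Suc gam \<le> e" "e < L" "d < L" "E (ps!e) (ps!d)"
  shows "gam \<le> d + 1"
proof (cases "e = L - 1")
  case True then show ?thesis using gmin[of d] assms(4) by simp
next
  case False
  show ?thesis
  proof (rule ccontr)
    assume "\<not> ?thesis"
    then have dg: "d + 2 \<le> gam" by simp
    have e1: "E (ps!(L-1)) (ps!(e-1))" using S3[of "e-1"] assms False by auto
    let ?is = "[0..<Suc d] @ [e..<L] @ rev [Suc d..<e]"
    have dd: "distinct ?is" using dg assms by auto
    have st: "set ?is = {..<L}" using dg assms by auto
    have sc: "successively R ?is"
      using dg assms e1 sym
      by (auto simp: successively_append_iff hd_rev last_rev hd_append simp del: upt_Suc)
    have h: "hd ?is = 0" by (simp del: upt_Suc)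
    have l: "last ?is = Suc d" using dg assms using ps_ne by (simp add: last_append last_rev del: upt_Suc)
    have "E (ps!(last ?is)) (ps!(L-1))"
      by (rule end_lemma(2)[OF dd st sc h]) (use l dg gle in auto)
    then have "gam \<le> Suc d" using l sym gmin by metis
    then show False using dg by simp
  qed
qed

lemma endZ:
  assumes "Suc gam \<le> e" "e < L" "E (ps!e) w"
  shows "w \<in> set ps"
proof -
  have e1: "E (ps!(e-1)) (ps!(L-1))" using S3[of "e-1"] assms sym by auto
  let ?is = "[0..<e] @ rev [e..<L]"
  have dd: "distinct ?is" by auto
  have st: "set ?is = {..<L}" using assms by auto
  have sc: "successively R ?is"
    using assms e1 g1 by (auto simp: successively_append_iff hd_rev last_rev hd_append simp del: upt_Suc)
  have h: "hd ?is = 0" using assms g1 by (simp del: upt_Suc)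
  have l: "last ?is = e" using assms using ps_ne by (simp add: last_append last_rev del: upt_Suc)
  show ?thesis using end_lemma(3)[OF dd st sc h] l assms(3) by simp
qed


lemma nth_inj: "i < L \<Longrightarrow> j < L \<Longrightarrow> ps!i = ps!j \<longleftrightarrow> i = j"
  using nth_eq_iff_index_eq[OF ps_dist] by blast

lemma lpb_False: False
proof (cases "\<exists>e. Suc gam \<le> e \<and> e < L \<and> E (ps!e) (ps!(gam-1))")
  case True
  then obtain e where e: "Suc gam \<le> e" "e < L" "E (ps!e) (ps!(gam-1))" by blast
  have eL: "e \<noteq> L - 1"
  proof
    assume "e = L - 1"
    then have "gam \<le> gam - 1" using gmin e(3) by simp
    then show False using g1 by simp
  qed
  have e1: "E (ps!(L-1)) (ps!(e-1))" using S3[of "e-1"] e eL by auto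
  let ?is = "[0..<gam] @ [e..<L] @ rev [gam..<e]"
  have dd: "distinct ?is" using e by auto
  have st: "set ?is = {..<L}" using e by auto
  have sc: "successively R ?is"
    using e e1 g1 sym by (auto simp: successively_append_iff hd_rev last_rev hd_append simp del: upt_Suc)
  have h: "hd ?is = 0" using g1 by (simp del: upt_Suc)
  have l: "last ?is = gam" using e ps_ne by (simp add: last_append last_rev del: upt_Suc)
  show False
  proof (cases "gam = 1")
    case True
    show False
    proof (rule idx_cycle[OF dd st sc])
      have "E (ps!0) (ps!(Suc 0))" using adj[of 0] len3 by simp
      then show "R (last ?is) (hd ?is)" using l h True sym by simp
    qed
  next
    case False
    then have g2: "2 \<le> gam" using g1 by simp
    have gnb: "w \<in> set ps" if "E (ps!gam) w" for w
      using end_lemma(3)[OF dd st sc h] l that by simp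
    have gS: "gam \<le> d + 1" if "d < L" "E (ps!gam) (ps!d)" for d
    proof (rule ccontr)
      assume "\<not> ?thesis"
      then have dg: "d + 2 \<le> gam" by simp
      let ?js = "[0..<Suc d] @ [gam..<e] @ rev [e..<L] @ rev [Suc d..<gam]"
      have dd': "distinct ?js" using e dg by auto
      have st': "set ?js = {..<L}" using e dg by auto
      have sc': "successively R ?js"
        using e e1 dg that sym
        by (auto simp: successively_append_iff hd_rev last_rev hd_append simp del: upt_Suc)
      have h': "hd ?js = 0" by (simp del: upt_Suc)
      have l': "last ?js = Suc d" using dg ps_ne by (simp add: last_append last_rev del: upt_Suc)
      have "E (ps!(last ?js)) (ps!(L-1))"
        by (rule end_lemma(2)[OF dd' st' sc' h']) (use l' dg gle in auto)
      then have "gam \<le> Suc d" using l' sym gmin by metis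
      then show False using dg by simp
    qed
    have c: "ps!(gam-1) \<in> V" using psV gle by simp
    have "\<not> connected_on (V - {ps!(gam-1)}) E"
    proof (rule cut_lemma[where b = "ps!(L-1)" and a = "ps!0" and Z = "(!) ps ` {gam..<L}"])
      show "(!) ps ` {gam..<L} \<subseteq> V - {ps!(gam-1)}"
        using psV nth_inj gle g1 by auto
      show "ps!(L-1) \<in> (!) ps ` {gam..<L}" by (rule imageI) (use gle in auto)
      have "0 < L" "gam - 1 < L" using gle by auto
      then show "ps!0 \<in> V - {ps!(gam-1)}" using psV nth_inj[of 0 "gam-1"] g2 by auto
      show "ps!0 \<notin> (!) ps ` {gam..<L}"
      proof
        assume "ps!0 \<in> (!) ps ` {gam..<L}"
        then obtain x where x: "gam \<le> x" "x < L" "ps!0 = ps!x" by auto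
        moreover have "0 < L" using gle by auto
        ultimately show False using nth_inj[of 0 x] g1 by auto
      qed
      fix z w assume z: "z \<in> (!) ps ` {gam..<L}" and zw: "E z w"
      then obtain j where j: "gam \<le> j" "j < L" "z = ps!j" by auto
      have "w \<in> set ps"
        using gnb endZ[of j w] zw j by (cases "j = gam") auto
      then obtain d where d: "d < L" "w = ps!d" by (auto simp: in_set_conv_nth)
      have "gam \<le> d + 1"
        using gS[of d] S4[of j d] zw j d by (cases "j = gam") auto
      then show "w \<in> (!) ps ` {gam..<L} \<or> w = ps!(gam-1)"
        using d by (cases "d = gam - 1") auto
    qed
    then show False using conn2[OF c] by simp
  qed
next
  case False
  have c: "ps!gam \<in> V" using psV gle by simp
  have "\<not> connected_on (V - {ps!gam}) E"
  proof (rule cut_lemma[where b = "ps!(L-1)" and a = "ps!0" and Z = "(!) ps ` {Suc gam..<L}"])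
    show "(!) ps ` {Suc gam..<L} \<subseteq> V - {ps!gam}"
      using psV nth_inj gle by auto
    show "ps!(L-1) \<in> (!) ps ` {Suc gam..<L}" by (rule imageI) (use gle in auto)
    have "0 < L" "gam < L" using gle by auto
    then show "ps!0 \<in> V - {ps!gam}" using psV nth_inj[of 0 gam] g1 by auto
    show "ps!0 \<notin> (!) ps ` {Suc gam..<L}"
    proof
      assume "ps!0 \<in> (!) ps ` {Suc gam..<L}"
      then obtain x where x: "Suc gam \<le> x" "x < L" "ps!0 = ps!x" by auto
      moreover have "0 < L" using gle by auto
      ultimately show False using nth_inj[of 0 x] by auto
    qed
    fix z w assume z: "z \<in> (!) ps ` {Suc gam..<L}" and zw: "E z w"
    then obtain j where j: "Suc gam \<le> j" "j < L" "z = ps!j" by auto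
    have "w \<in> set ps" using endZ[of j w] zw j by auto
    then obtain d where d: "d < L" "w = ps!d" by (auto simp: in_set_conv_nth)
    have "gam \<le> d + 1" using S4[of j d] zw j d by auto
    moreover have "d \<noteq> gam - 1" using False zw j d by auto
    ultimately show "w \<in> (!) ps ` {Suc gam..<L} \<or> w = ps!gam"
      using d by (cases "d = gam") auto
  qed
  then show False using conn2[OF c] by simp
qed

end


lemma (in lp) lp_False: False
proof -
  have "\<not> (k \<le> degree V E (hd ps) \<and> k \<le> degree V E (last ps))" using sweep by blast
  then show False
  proof (cases "degree V E (last ps) < k")
    case True
    have "lpb V E s t k ps" by (intro lpb.intro lp_axioms lpb_axioms.intro True)
    then show False by (rule lpb.lpb_False)
  next
    case False
    then have sm: "degree V E (last (rev ps)) < k"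
      using \<open>\<not> (k \<le> degree V E (hd ps) \<and> k \<le> degree V E (last ps))\<close> ps_ne by (simp add: last_rev)
    have rp: "isPath (rev ps)" using ps sym unfolding isPath_def by (auto intro: successively_mono)
    have "lp V E s t k (rev ps)"
      by (intro lp.intro hg_axioms lp_axioms.intro rp) (use longest len3 in auto)
    then have "lpb V E s t k (rev ps)" by (intro lpb.intro lpb_axioms.intro sm)
    then show False by (rule lpb.lpb_False)
  qed
qed

lemma (in hg) hg_False: False
proof -
  have "V \<noteq> {}" using card3 by (metis card.empty not_numeral_le_zero)
  then obtain v where v: "v \<in> V" by blast
  have "card (V - {v}) \<ge> 2" using card3 fin v by simp
  then have "V - {v} \<noteq> {}" by (metis card.empty not_numeral_le_zero)
  then obtain y where y: "y \<in> V - {v}" by blast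
  obtain u where u: "u \<in> V" "u \<noteq> v" "E v u"
    using crossing[OF conn, of "{v}" v y] v y by auto
  have "card (V - {u, v}) \<ge> 1" using card3 fin v u by (simp add: card_Diff_subset)
  then have "V - {u, v} \<noteq> {}" by (metis card.empty not_one_le_zero)
  then obtain y' where y': "y' \<in> V - {u, v}" by blast
  obtain w where w: "w \<in> V - {u}" "w \<noteq> v" "E v w"
    using crossing[OF conn2[OF u(1)], of "{v}" v y'] v y' u by auto
  have p3: "isPath [u, v, w]" using u w v sym unfolding isPath_def by auto
  have bnd: "\<forall>xs. isPath xs \<longrightarrow> length xs < card V + 1"
  proof (intro allI impI)
    fix xs assume "isPath xs"
    then have "length xs = card (set xs)" "set xs \<subseteq> V" unfolding isPath_def by (auto simp: distinct_card)
    then have "length xs \<le> card V" using card_mono[OF fin] by metis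
    then show "length xs < card V + 1" by simp
  qed
  obtain ps where ps: "isPath ps" "\<forall>qs. isPath qs \<longrightarrow> length qs \<le> length ps"
    using Lattices_Big.ex_has_greatest_nat[of isPath "[u, v, w]" length "card V + 1"] p3 bnd by blast
  have "length [u, v, w] \<le> length ps" using ps(2) p3 by blast
  then have "3 \<le> length ps" by simp
  then have "lp V E s t k ps" by (intro lp.intro hg_axioms lp_axioms.intro) (use ps in auto)
  then show False by (rule lp.lp_False)
qed

theorem mainTheorem1:
  fixes V :: "'a set" and E :: "'a \<Rightarrow> 'a \<Rightarrow> bool"
  assumes "simple_graph V E"
    and "two_connected V E"
    and "card V \<ge> 3"
    and "sigma2 V E \<ge> enat (2 * bipartite_hole_number V E)"
  shows "hamiltonian V E"
proof (rule ccontr)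
  assume nh: "\<not> hamiltonian V E"
  define k where "k = bipartite_hole_number V E"
  have fin: "finite V" using assms(1) unfolding simple_graph_def by auto
  have ex: "\<exists>k s t. 0 < s \<and> 0 < t \<and> s + t = k + 1 \<and> \<not> has_bipartite_hole V E s t"
  proof (intro exI conjI)
    show "\<not> has_bipartite_hole V E (card V + 1) 1"
      unfolding has_bipartite_hole_def using card_mono[OF fin] by fastforce
  qed auto
  obtain s t where st: "0 < s" "0 < t" "s + t = k + 1" "\<not> has_bipartite_hole V E s t"
    using LeastI_ex[OF ex] unfolding k_def bipartite_hole_number_def by blast
  have sig: "2 * k \<le> degree V E u + degree V E v"
    if "u \<in> V" "v \<in> V" "u \<noteq> v" "\<not> E u v" for u v
  proof -
    have "sigma2 V E \<le> enat (degree V E (fst (u, v)) + degree V E (snd (u, v)))"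
      unfolding sigma2_def by (rule INF_lower) (use that in auto)
    moreover have "enat (2 * k) \<le> sigma2 V E" using assms(4) unfolding k_def .
    ultimately have "enat (2 * k) \<le> enat (degree V E u + degree V E v)"
      using order_trans by fastforce
    then show ?thesis by simp
  qed
  have "hg V E s t k"
  proof (unfold_locales)
    show "finite V" by (fact fin)
  qed (use assms st sig nh in \<open>auto simp: simple_graph_def two_connected_def\<close>)
  then show False by (rule hg.hg_False)
qed

end
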